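(* Let $G=C_{2n}(a,n)$ with $a\in\{1,2\}$ be a connected cubic circulant graph and $\mathbf e=(e_1,\ldots,e_{t-1})$ a tuple of (possibly repeated) edges of $G$. Assume that $G_{\mathbf e}$ has a loop at the vertex $j$. Then $\{j,v\}\in E(G_{\mathbf e})$ for all $v\in V(G)$.
   Context: For integers $1\le a<n$, $C_{2n}(a,n)$ is the simple graph on vertex set $[2n]$ in which distinct vertices $i,j$ are adjacent iff $|i-j|\in\{a,n,2n-a\}$. Two vertices $u,v$ (possibly $u=v$) are even-connected with respect to $\mathbf e$ if there is a walk $p_0p_1\cdots p_{2k+1}$, $k\ge1$, in $G$ with $p_0=u$, $p_{2k+1}=v$, each $\{p_r,p_{r+1}\}$ ($0\le r\le 2k$) an edge of $G$, each $\{p_{2l+1},p_{2l+2}\}$ ($0\le l\le k-1$) equal to some $e_i$, and for every $i$ the number of $l$ with $\{p_{2l+1},p_{2l+2}\}=e_i$ is at most the number of indices $j$ with $e_j=e_i$. $G_{\mathbf e}$ is the graph (possibly with loops) on $V(G)$ with edge set $E(G)\cup\{\{u,v\}\mid u,v \text{ even-connected with respect to } \mathbf e\}$; a loop at $j$ means $\{j,j\}\in E(G_{\mathbf e})$. *)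

theory Defs
  imports Main
begin

definition circ_vertices :: "nat \<Rightarrow> nat set" where
  "circ_vertices n = {1..2*n}"

definition circ_adj :: "nat \<Rightarrow> nat \<Rightarrow> nat \<Rightarrow> nat \<Rightarrow> bool" where
  "circ_adj n a i j \<longleftrightarrow> i \<in> circ_vertices n \<and> j \<in> circ_vertices n \<and> i \<noteq> j
     \<and> nat \<bar>int i - int j\<bar> \<in> {a, n, 2*n - a}"

definition edges_of :: "('v \<Rightarrow> 'v \<Rightarrow> bool) \<Rightarrow> 'v set set" where
  "edges_of adj = {{u, v} | u v. adj u v}"

definition graph_connected :: "'v set \<Rightarrow> ('v \<Rightarrow> 'v \<Rightarrow> bool) \<Rightarrow> bool" where
  "graph_connected V adj \<longleftrightarrow> (\<forall>u\<in>V. \<forall>v\<in>V. adj\<^sup>*\<^sup>* u v)"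

definition graph_cubic :: "'v set \<Rightarrow> ('v \<Rightarrow> 'v \<Rightarrow> bool) \<Rightarrow> bool" where
  "graph_cubic V adj \<longleftrightarrow> (\<forall>v\<in>V. card {u. adj v u} = 3)"

text \<open>Even-connectedness of u and v with respect to the tuple es = (e_1,...,e_{t-1})
  (a list of edges): a walk p_0 p_1 ... p_{2k+1}, k \<ge> 1, from u to v in the graph,
  whose odd steps {p_{2l+1}, p_{2l+2}} are among the e_i, each e_i used at most as
  often as it occurs in es.\<close>
definition even_connected ::
  "('v \<Rightarrow> 'v \<Rightarrow> bool) \<Rightarrow> 'v set list \<Rightarrow> 'v \<Rightarrow> 'v \<Rightarrow> bool" where
  "even_connected adj es u v \<longleftrightarrow>
     (\<exists>p :: 'v list. \<exists>k :: nat. k \<ge> 1 \<and> length p = 2*k + 2 \<and>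
        p ! 0 = u \<and> p ! (2*k + 1) = v \<and>
        (\<forall>r \<le> 2*k. {p ! r, p ! (r+1)} \<in> edges_of adj) \<and>
        (\<forall>l < k. {p ! (2*l+1), p ! (2*l+2)} \<in> set es) \<and>
        (\<forall>i < length es.
           card {l. l < k \<and> {p ! (2*l+1), p ! (2*l+2)} = es ! i}
             \<le> card {j. j < length es \<and> es ! j = es ! i}))"

text \<open>Edge set of G_e (loops appear as singleton sets {j,j} = {j}).\<close>
definition edges_Ge :: "('v \<Rightarrow> 'v \<Rightarrow> bool) \<Rightarrow> 'v set list \<Rightarrow> 'v set set" where
  "edges_Ge adj es = edges_of adj \<union> {{u, v} | u v. even_connected adj es u v}"

end

theory Submission
  imports Defs
begin


lemma edges_of_iff:
  assumes "\<And>x y. adj x y \<Longrightarrow> adj y x"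
  shows "{x,y} \<in> edges_of adj \<longleftrightarrow> adj x y"
  unfolding edges_of_def using assms by (auto simp: doubleton_eq_iff)

lemma subwalk:
  assumes "k' \<ge> 1" "length q = 2*k'+2" "q!0 = u" "q!(2*k'+1) = v"
    "\<forall>r\<le>2*k'. {q!r, q!(r+1)} \<in> edges_of adj"
    "\<forall>l<k. {p!(2*l+1), p!(2*l+2)} \<in> set es"
    "\<forall>i<length es. card {l. l<k \<and> {p!(2*l+1),p!(2*l+2)} = es!i}
        \<le> card {j. j < length es \<and> es ! j = es ! i}"
    "inj_on f {..<k'}"
    "\<forall>l<k'. f l < k \<and> {q!(2*l+1), q!(2*l+2)} = {p!(2*f l+1), p!(2*f l+2)}"
  shows "even_connected adj es u v"
  unfolding even_connected_def
proof (intro exI conjI allI impI)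
  show "1 \<le> k'" "length q = 2*k'+2" "q!0 = u" "q!(2*k'+1) = v" by fact+
  show "\<And>r. r \<le> 2*k' \<Longrightarrow> {q!r, q!(r+1)} \<in> edges_of adj" using assms(5) by blast
  show "\<And>l. l < k' \<Longrightarrow> {q!(2*l+1), q!(2*l+2)} \<in> set es" using assms(6,9) by metis
  fix i assume i: "i < length es"
  let ?A = "{l. l<k' \<and> {q!(2*l+1), q!(2*l+2)} = es!i}"
  let ?B = "{l. l<k \<and> {p!(2*l+1),p!(2*l+2)} = es!i}"
  have "card ?A = card (f ` ?A)"
    by (rule card_image[symmetric]) (rule inj_on_subset[OF assms(8)], auto)
  also have "\<dots> \<le> card ?B"
    by (rule card_mono) (use assms(9) in auto)
  also have "\<dots> \<le> card {j. j < length es \<and> es ! j = es ! i}" using assms(7) i by blast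
  finally show "card ?A \<le> card {j. j < length es \<and> es ! j = es ! i}" .
qed

lemma extend:
  assumes sym: "\<And>x y. adj x y \<Longrightarrow> adj y x"
    and k: "k \<ge> 1" "length p = 2*k+2" "p!0 = j" "p!(2*k+1) = j"
    and e: "\<forall>r\<le>2*k. {p!r, p!(r+1)} \<in> edges_of adj"
    and s: "\<forall>l<k. {p!(2*l+1), p!(2*l+2)} \<in> set es"
    and c: "\<forall>i<length es. card {l. l<k \<and> {p!(2*l+1),p!(2*l+2)} = es!i}
        \<le> card {j. j < length es \<and> es ! j = es ! i}"
    and i: "i \<le> 2*k+1" "adj (p!i) v"
  shows "adj j v \<or> even_connected adj es j v"
proof -
  consider "i = 0" | "i = 2*k+1" | m where "i = 2*m" "1 \<le> m" "m \<le> k"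
    | m where "i = 2*m+1" "m+1 \<le> k"
    using i(1) by (metis Suc_eq_plus1 add_le_cancel_right dvd_def le_Suc_eq oddE
       mult_le_cancel1 not_less_eq_eq One_nat_def le_add_same_cancel1 nat_1_add_1
       mult_is_0 one_le_mult_iff odd_two_times_div_two_succ order.trans
       linorder_not_le add_0 bot_nat_0.not_eq_extremum)
  then show ?thesis
  proof cases
    case 1 then show ?thesis using i k by auto
  next
    case 2 then show ?thesis using i k by auto
  next
    case 3
    define q where "q = map (\<lambda>s. if s \<le> 2*m then p!s else v) [0..<2*m+2]"
    have "even_connected adj es j v"
    proof (rule subwalk[where q=q and k'=m and p=p and k=k and f=id])
      show "1 \<le> m" "length q = 2*m+2" using 3 by (auto simp: q_def)
      show "q!0 = j" "q!(2*m+1) = v" using 3 k by (auto simp: q_def nth_append)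
      show "\<forall>r\<le>2*m. {q!r, q!(r+1)} \<in> edges_of adj"
      proof (intro allI impI)
        fix r assume r: "r \<le> 2*m"
        show "{q!r, q!(r+1)} \<in> edges_of adj"
        proof (cases "r = 2*m")
          case True then show ?thesis using i 3 r
            by (simp add: q_def nth_append edges_of_iff[OF sym] del: upt_Suc)
        next
          case False then show ?thesis using e 3 r
            by (simp add: q_def nth_append del: upt_Suc)
        qed
      qed
      show "\<forall>l<m. id l < k \<and> {q!(2*l+1), q!(2*l+2)} = {p!(2*id l+1), p!(2*id l+2)}"
        using 3 by (auto simp: q_def nth_append simp del: upt_Suc)
    qed (use s c in auto)
    then show ?thesis by blast
  next
    case 4
    define k' where "k' = k - m"
    define q where "q = map (\<lambda>s. if s \<le> 2*k' then p!(2*k+1-s) else v) [0..<2*k'+2]"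
    have "even_connected adj es j v"
    proof (rule subwalk[where q=q and k'=k' and p=p and k=k and f="\<lambda>l. k-1-l"])
      show "1 \<le> k'" "length q = 2*k'+2" using 4 by (auto simp: q_def k'_def)
      show "q!0 = j" "q!(2*k'+1) = v" using 4 k by (auto simp: q_def nth_append)
      show "\<forall>r\<le>2*k'. {q!r, q!(r+1)} \<in> edges_of adj"
      proof (intro allI impI)
        fix r assume r: "r \<le> 2*k'"
        show "{q!r, q!(r+1)} \<in> edges_of adj"
        proof (cases "r = 2*k'")
          case True
          have "2*k+1-r = i" using True 4 by (simp add: k'_def)
          then show ?thesis using i 4 r True
            by (simp add: q_def nth_append edges_of_iff[OF sym] del: upt_Suc)
        next
          case False
          have "{p!(2*k-r), p!(2*k-r+1)} \<in> edges_of adj" using e by simp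
          moreover have "2*k-r+1 = 2*k+1-r" "2*k+1-(r+1) = 2*k-r" using r 4 by (auto simp: k'_def)
          ultimately show ?thesis using 4 r False
            by (simp add: q_def nth_append insert_commute del: upt_Suc)
        qed
      qed
      show "inj_on (\<lambda>l. k-1-l) {..<k'}" unfolding k'_def inj_on_def using 4 by auto
      show "\<forall>l<k'. k-1-l < k \<and> {q!(2*l+1), q!(2*l+2)} = {p!(2*(k-1-l)+1), p!(2*(k-1-l)+2)}"
      proof (intro allI impI conjI)
        fix l assume l: "l < k'"
        show "k-1-l < k" using k by auto
        have a: "2*k+1-(2*l+1) = 2*(k-1-l)+2" "2*k+1-(2*l+2) = 2*(k-1-l)+1"
          using l 4 by (auto simp: k'_def)
        show "{q!(2*l+1), q!(2*l+2)} = {p!(2*(k-1-l)+1), p!(2*(k-1-l)+2)}"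
          using l a by (simp add: q_def nth_append insert_commute del: upt_Suc)
      qed
    qed (use s c in auto)
    then show ?thesis by blast
  qed
qed

definition dd :: "nat \<Rightarrow> nat \<Rightarrow> nat \<Rightarrow> nat" where
 "dd n r x = (if r \<le> x then x - r else x + 2*n - r)"
definition cD1 :: "nat \<Rightarrow> nat \<Rightarrow> nat" where
 "cD1 n d = (if d < n then d else d - n + 1) mod 2"

lemma dd_lt: "1 \<le> r \<Longrightarrow> r \<le> 2*n \<Longrightarrow> 1 \<le> x \<Longrightarrow> x \<le> 2*n \<Longrightarrow> dd n r x < 2*n"
  unfolding dd_def by auto
lemma dd_0: "1 \<le> r \<Longrightarrow> r \<le> 2*n \<Longrightarrow> 1 \<le> x \<Longrightarrow> x \<le> 2*n \<Longrightarrow> x \<noteq> r \<Longrightarrow> dd n r x \<noteq> 0"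
  unfolding dd_def by auto
lemma dd_n: "1 \<le> r \<Longrightarrow> r \<le> 2*n \<Longrightarrow> 1 \<le> x \<Longrightarrow> x \<le> 2*n \<Longrightarrow> x \<noteq> r+n \<Longrightarrow> x+n \<noteq> r \<Longrightarrow> dd n r x \<noteq> n"
  unfolding dd_def by auto
lemma dd_step: "1 \<le> r \<Longrightarrow> r \<le> 2*n \<Longrightarrow> 1 \<le> x \<Longrightarrow> y \<le> 2*n \<Longrightarrow> y = x + s \<Longrightarrow>
   dd n r y = dd n r x + s \<or> dd n r y + 2*n = dd n r x + s"
  unfolding dd_def by auto
lemma m2: "(x::nat) mod 2 \<noteq> (x+1) mod 2" by presburger

definition cD2 :: "nat \<Rightarrow> nat \<Rightarrow> nat" where
 "cD2 n d = (if even d then d div 2 else if d < n then (d+n) div 2 + 1 else (d-n) div 2 + 1) mod 2"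

lemma cD1_step: assumes "d < 2*n" "d' < 2*n" "d \<noteq> 0" "d \<noteq> n" "d' \<noteq> 0" "d' \<noteq> n"
   "s \<in> {1, n}" "d' = d + s \<or> d' + 2*n = d + s" shows "cD1 n d \<noteq> cD1 n d'"
proof -
  consider "d'=d+1" "d<n" | "d'=d+1" "d>n" | "d'=d+n" | "d'+n=d" | "d'+2*n = d+1"
    using assms by fastforce
  then show ?thesis
  proof cases
    case 1 then have "d' < n" using assms by auto
    then show ?thesis using 1 m2[of d] by (simp add: cD1_def)
  next
    case 2 then have "d' - n + 1 = (d - n + 1) + 1" by auto
    then show ?thesis using 2 m2[of "d-n+1"] by (simp add: cD1_def)
  next
    case 3 then have "d < n" "d' - n + 1 = d + 1" using assms by auto
    then show ?thesis using 3 m2[of d] by (simp add: cD1_def)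
  next
    case 4 then have "d' < n" "\<not> d < n" "d - n + 1 = d' + 1" using assms by auto
    then show ?thesis using 4 m2[of d'] by (simp add: cD1_def)
  next
    case 5 then show ?thesis using assms by auto
  qed
qed

lemma cD2_even: "d = 2*t \<Longrightarrow> cD2 n d = t mod 2" by (simp add: cD2_def)
lemma cD2_lt: "n = 2*m+1 \<Longrightarrow> d = 2*t+1 \<Longrightarrow> d < n \<Longrightarrow> cD2 n d = (t+m) mod 2"
proof -
  assume a: "n = 2*m+1" "d = 2*t+1" "d < n"
  have "(d+n) div 2 + 1 = t+m+2" using a by simp
  then show ?thesis using a by (simp add: cD2_def)
qed
lemma cD2_gt: "n = 2*m+1 \<Longrightarrow> d = 2*t+1 \<Longrightarrow> \<not> d < n \<Longrightarrow> cD2 n d = (t-m+1) mod 2"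
proof -
  assume a: "n = 2*m+1" "d = 2*t+1" "\<not> d < n"
  have "(d-n) div 2 + 1 = t-m+1" using a by simp
  then show ?thesis using a by (simp add: cD2_def)
qed
lemma pm: "(x::nat) mod 2 \<noteq> (x+1) mod 2" "(x+1) mod 2 \<noteq> x mod 2" by presburger+

lemma cD2_step: assumes "odd n" "d < 2*n" "d' < 2*n" "d \<noteq> 0" "d \<noteq> n" "d' \<noteq> 0" "d' \<noteq> n"
   "s \<in> {2, n}" "d' = d + s \<or> d' + 2*n = d + s" shows "cD2 n d \<noteq> cD2 n d'"
proof -
  obtain m where m: "n = 2*m+1" using assms(1) oddE by blast
  consider "d'=d+2" | "d'=d+n" | "d'+n=d" | "d'+2*n = d+2"
    using assms by fastforce
  then show ?thesis
  proof cases
    case 1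
    show ?thesis
    proof (cases "even d")
      case True then obtain t where t: "d = 2*t" by blast
      then have "d' = 2*(t+1)" using 1 by simp
      then show ?thesis using cD2_even[OF t] cD2_even[of d' "t+1"] pm by simp
    next
      case False then obtain t where t: "d = 2*t+1" using oddE by blast
      then have t': "d' = 2*(t+1)+1" using 1 by simp
      show ?thesis
      proof (cases "d < n")
        case True
        then have "d' < n" using 1 t m assms(7) by auto
        then show ?thesis using cD2_lt[OF m t True] cD2_lt[OF m t'] pm by simp
      next
        case False
        then have "\<not> d' < n" using 1 by auto
        moreover have "t+1-m+1 = (t-m+1)+1" using False t m by auto
        ultimately show ?thesis using cD2_gt[OF m t False] cD2_gt[OF m t'] pm by simp
      qed
    qed
  next
    case 2
    then have lt: "d < n" using assms by auto
    show ?thesis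
    proof (cases "even d")
      case True then obtain t where t: "d = 2*t" by blast
      then have t': "d' = 2*(t+m)+1" "\<not> d' < n" using 2 m by auto
      have "t + m - m + 1 = t+1" by simp
      then show ?thesis using cD2_even[OF t] cD2_gt[OF m t'] pm by simp
    next
      case False then obtain t where t: "d = 2*t+1" using oddE by blast
      then have t': "d' = 2*(t+m+1)" using 2 m by auto
      then show ?thesis using cD2_lt[OF m t lt] cD2_even[OF t'] pm by simp
    qed
  next
    case 3
    then have lt: "d' < n" "\<not> d < n" using assms by auto
    show ?thesis
    proof (cases "even d'")
      case True then obtain t where t: "d' = 2*t" by blast
      then have t': "d = 2*(t+m)+1" using 3 m by auto
      have "t + m - m + 1 = t+1" by simp
      then show ?thesis using cD2_even[OF t] cD2_gt[OF m t' lt(2)] pm by simp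
    next
      case False then obtain t where t: "d' = 2*t+1" using oddE by blast
      then have t': "d = 2*(t+m+1)" using 3 m by auto
      then show ?thesis using cD2_lt[OF m t lt(1)] cD2_even[OF t'] pm by simp
    qed
  next
    case 4 then have "d = 2*n - 1" "d' = 1" "1 < n" using assms by auto
    then have a: "d = 2*(2*m) + 1" "\<not> d < n" "d' = 2*0+1" "d' < n" using m by auto
    show ?thesis using cD2_gt[OF m a(1,2)] cD2_lt[OF m a(3,4)] pm m by simp
  qed
qed


definition colr :: "nat \<Rightarrow> nat \<Rightarrow> nat \<Rightarrow> nat \<Rightarrow> nat" where
  "colr n a r x = (if a = 1 then cD1 n (dd n r x) else cD2 n (dd n r x))"

lemma colr_lt: "colr n a r x < 2"
  unfolding colr_def cD1_def cD2_def by auto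

lemma col_adj:
  assumes A: "a = 1 \<or> (a = 2 \<and> odd n)" "a < n" "r \<in> circ_vertices n" "circ_adj n a x y"
    "x \<noteq> r" "x \<noteq> r+n" "x+n \<noteq> r" "y \<noteq> r" "y \<noteq> r+n" "y+n \<noteq> r"
  shows "colr n a r x \<noteq> colr n a r y"
proof -
  have h: "1 \<le> r" "r \<le> 2*n" "1\<le>x" "x\<le>2*n" "1\<le>y" "y\<le>2*n" "x\<noteq>y"
    "nat \<bar>int x - int y\<bar> \<in> {a, n, 2*n-a}"
    using assms(3,4) unfolding circ_adj_def circ_vertices_def by auto
  have c: "y = x+a \<or> x = y+a \<or> y = x+n \<or> x = y+n \<or> x = y + (2*n-a) \<or> y = x + (2*n-a)"
    using h(8) A(2) by auto
  define dx where "dx = dd n r x"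
  define dy where "dy = dd n r y"
  have b: "dx < 2*n" "dy < 2*n" "dx \<noteq> 0" "dy \<noteq> 0" "dx \<noteq> n" "dy \<noteq> n"
    unfolding dx_def dy_def using dd_lt dd_0 dd_n h assms(5-10) by auto
  have key: "\<exists>s\<in>{a,n}. (dy = dx + s \<or> dy + 2*n = dx + s) \<or> (dx = dy + s \<or> dx + 2*n = dy + s)"
    using c
  proof (elim disjE)
    assume "y = x+a" then show ?thesis using dd_step[OF h(1,2,3,6)] unfolding dx_def dy_def by blast
  next
    assume "x = y+a" then show ?thesis using dd_step[OF h(1,2,5,4)] unfolding dx_def dy_def by blast
  next
    assume "y = x+n" then show ?thesis using dd_step[OF h(1,2,3,6)] unfolding dx_def dy_def by blast
  next
    assume "x = y+n" then show ?thesis using dd_step[OF h(1,2,5,4)] unfolding dx_def dy_def by blast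
  next
    assume "x = y + (2*n-a)"
    then have "dx = dy + (2*n-a) \<or> dx + 2*n = dy + (2*n-a)"
      using dd_step[OF h(1,2,5,4)] unfolding dx_def dy_def by blast
    then have "dy + 2*n = dx + a \<or> dy = dx + a" using A(2) by auto
    then show ?thesis by blast
  next
    assume "y = x + (2*n-a)"
    then have "dy = dx + (2*n-a) \<or> dy + 2*n = dx + (2*n-a)"
      using dd_step[OF h(1,2,3,6)] unfolding dx_def dy_def by blast
    then have "dx + 2*n = dy + a \<or> dx = dy + a" using A(2) by auto
    then show ?thesis by blast
  qed
  then obtain s where s: "s \<in> {a,n}" and
    o: "(dy = dx + s \<or> dy + 2*n = dx + s) \<or> (dx = dy + s \<or> dx + 2*n = dy + s)" by blast
  show ?thesis
  proof (cases "a = 1")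
    case True
    then have s1: "s \<in> {1,n}" using s by auto
    have "cD1 n dx \<noteq> cD1 n dy"
      using o cD1_step[OF b(1,2,3,5,4,6) s1] cD1_step[OF b(2,1,4,6,3,5) s1] by metis
    then show ?thesis unfolding colr_def dx_def dy_def using True by simp
  next
    case False
    then have a2: "a = 2" "odd n" using A(1) by auto
    then have s1: "s \<in> {2,n}" using s by auto
    have "cD2 n dx \<noteq> cD2 n dy"
      using o cD2_step[OF a2(2) b(1,2,3,5,4,6) s1] cD2_step[OF a2(2) b(2,1,4,6,3,5) s1] by metis
    then show ?thesis unfolding colr_def dx_def dy_def using a2 by simp
  qed
qed
lemma circ_adj_sym: "circ_adj n a x y \<Longrightarrow> circ_adj n a y x"
  unfolding circ_adj_def by (auto simp: abs_minus_commute)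

lemma dom:
  assumes A: "a = 1 \<or> (a = 2 \<and> odd n)" "a < n"
    and p: "length p = 2*k+2" "p!0 = p!(2*k+1)"
    and e: "\<forall>r\<le>2*k. circ_adj n a (p!r) (p!(r+1))"
    and v: "v \<in> circ_vertices n"
  shows "\<exists>i\<le>2*k+1. p!i = v \<or> circ_adj n a (p!i) v"
proof (rule ccontr)
  assume N: "\<not> ?thesis"
  have V: "p!i \<in> circ_vertices n" if "i \<le> 2*k+1" for i
  proof (cases i)
    case 0 then show ?thesis using e unfolding circ_adj_def by auto
  next
    case (Suc i') then show ?thesis using e[rule_format, of i'] that unfolding circ_adj_def by auto
  qed
  have av: "p!i \<noteq> v \<and> p!i \<noteq> v+n \<and> p!i + n \<noteq> v" if "i \<le> 2*k+1" for i
  proof -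
    have "\<not> circ_adj n a (p!i) v" "p!i \<noteq> v" using N that by auto
    moreover have "p!i \<in> circ_vertices n" using V that .
    ultimately show ?thesis using v assms(2) unfolding circ_adj_def circ_vertices_def by auto
  qed
  have alt: "colr n a v (p!s) = (colr n a v (p!0) + s) mod 2" if "s \<le> 2*k+1" for s
    using that
  proof (induction s)
    case 0 then show ?case using colr_lt[of n a v "p!0"] by simp
  next
    case (Suc s)
    have "colr n a v (p!s) \<noteq> colr n a v (p!(s+1))"
      using col_adj[OF A v e[rule_format, of s]] av[of s] av[of "s+1"] Suc.prems by auto
    moreover have "\<And>y c s. (y::nat) < 2 \<Longrightarrow> y \<noteq> (c+s) mod 2 \<Longrightarrow> y = (c + Suc s) mod 2" by presburger
    ultimately show ?case using Suc colr_lt[of n a v "p!(s+1)"] by auto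
  qed
  have "colr n a v (p!0) = (colr n a v (p!0) + (2*k+1)) mod 2" using alt[of "2*k+1"] p by simp
  then show False by presburger
qed

lemma parity_rt:
  assumes "a = 2" "even n" "(circ_adj n a)\<^sup>*\<^sup>* x y"
  shows "even x \<longleftrightarrow> even y"
  using assms(3)
proof (induction rule: rtranclp_induct)
  case base then show ?case by simp
next
  case (step y z)
  have "nat \<bar>int y - int z\<bar> \<in> {2, n, 2*n-2}" using step(2) assms(1) unfolding circ_adj_def by auto
  then have "y = z+2 \<or> z = y+2 \<or> y = z+n \<or> z = y+n \<or> y+2 = z+2*n \<or> z+2 = y+2*n" by auto
  then have "even y \<longleftrightarrow> even z" using assms(2) by presburger
  then show ?case using step by simp
qed

theorem lemma3p6:
  fixes n a j :: nat and es :: "nat set list"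
  assumes "a \<in> {1, 2}" and "1 \<le> a" and "a < n"
    and "graph_connected (circ_vertices n) (circ_adj n a)"
    and "graph_cubic (circ_vertices n) (circ_adj n a)"
    and "\<forall>e \<in> set es. e \<in> edges_of (circ_adj n a)"
    and "j \<in> circ_vertices n"
    and "{j, j} \<in> edges_Ge (circ_adj n a) es"
  shows "\<forall>v \<in> circ_vertices n. {j, v} \<in> edges_Ge (circ_adj n a) es"
proof
  fix v assume v: "v \<in> circ_vertices n"
  have A: "a = 1 \<or> (a = 2 \<and> odd n)"
  proof (rule ccontr)
    assume "\<not> ?thesis"
    then have a2: "a = 2" "even n" using assms(1) by auto
    have "1 \<in> circ_vertices n" "2 \<in> circ_vertices n" using assms(3) a2 unfolding circ_vertices_def by auto
    then have "(circ_adj n a)\<^sup>*\<^sup>* 1 2" using assms(4) unfolding graph_connected_def by blast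
    from parity_rt[OF a2 this] show False by simp
  qed
  have notE: "{j} \<notin> edges_of (circ_adj n a)" unfolding edges_of_def circ_adj_def
    by (auto simp: doubleton_eq_iff)
  have "{j} \<in> {{u, v} | u v. even_connected (circ_adj n a) es u v}"
    using assms(8) notE unfolding edges_Ge_def by auto
  then have "even_connected (circ_adj n a) es j j" by (auto simp: doubleton_eq_iff)
  then obtain p k where k: "k \<ge> 1" "length p = 2*k+2" "p!0 = j" "p!(2*k+1) = j"
    and e: "\<forall>r\<le>2*k. {p!r, p!(r+1)} \<in> edges_of (circ_adj n a)"
    and s: "\<forall>l<k. {p!(2*l+1), p!(2*l+2)} \<in> set es"
    and c: "\<forall>i<length es. card {l. l<k \<and> {p!(2*l+1),p!(2*l+2)} = es!i}
        \<le> card {j. j < length es \<and> es ! j = es ! i}"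
    unfolding even_connected_def by blast
  have e': "\<forall>r\<le>2*k. circ_adj n a (p!r) (p!(r+1))"
    using e edges_of_iff[of "circ_adj n a", OF circ_adj_sym] by blast
  have ext: "{j, v} \<in> edges_Ge (circ_adj n a) es"
    if "i \<le> 2*k+1" "circ_adj n a (p!i) v" for i
  proof -
    have "circ_adj n a j v \<or> even_connected (circ_adj n a) es j v"
      using extend[OF circ_adj_sym k e s c that] .
    then show ?thesis unfolding edges_Ge_def edges_of_def by blast
  qed
  show "{j, v} \<in> edges_Ge (circ_adj n a) es"
  proof (cases "v = j")
    case True then show ?thesis using assms(8) by simp
  next
    case False
    obtain i where i: "i \<le> 2*k+1" "p!i = v \<or> circ_adj n a (p!i) v"
      using dom[OF A assms(3) k(2) _ e' v] k by auto
    show ?thesis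
    proof (cases "circ_adj n a (p!i) v")
      case True then show ?thesis using ext i by blast
    next
      case F: False
      then have pv: "p!i = v" using i by auto
      have "i \<noteq> 0"
      proof
        assume "i = 0" then show False using k(3) False pv by simp
      qed
      then have "circ_adj n a (p!(i-1)) v" using e'[rule_format, of "i-1"] i pv by simp
      then show ?thesis using ext[of "i-1"] i by simp
    qed
  qed
qed
end
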